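(* Let $\Omega=\Omega_e\cup\Omega_o\subset\mathbb{Z}_2^n\setminus\{\mathbf 0\}$, where $\Omega_e$ and $\Omega_o$ are both nonempty, every tuple in $\Omega_e$ has even Hamming weight and every tuple in $\Omega_o$ has odd Hamming weight, and suppose $r(\Omega)=n$. Let $k=\min_{\beta\in\Omega_e}s(\beta)$, $l=\min_{\beta\in\Omega_o}s(\beta)$, $\Omega_e^*=\{\beta\in\Omega_e: s(\beta)=k\}$ and $\Omega_o^*=\{\beta\in\Omega_o:s(\beta)=l\}$. If either $\sum_{\beta\in\Omega_o^*}\beta\neq\mathbf 0$ in $\mathbb{Z}_2^n$ or $\sum_{\beta\in\Omega_e^*}\beta\neq\mathbf 0$ in $\mathbb{Z}_2^n$, then $\mathrm{NEPS}(P_3,\ldots,P_3;\Omega)$ exhibits pretty good state transfer between some pair of distinct vertices.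
   Context: $P_3$ is the path on three vertices. For graphs $G_1,\dots,G_n$ and $\Omega\subset\mathbb{Z}_2^n\setminus\{\mathbf 0\}$, $\mathrm{NEPS}(G_1,\dots,G_n;\Omega)$ is the graph on $V(G_1)\times\cdots\times V(G_n)$ in which $(x_1,\dots,x_n)$ and $(y_1,\dots,y_n)$ are adjacent iff there is $\beta\in\Omega$ with $x_i=y_i$ whenever $\beta_i=0$ and $x_i$ adjacent to $y_i$ in $G_i$ whenever $\beta_i=1$; its adjacency matrix is $\sum_{\beta\in\Omega}A_1^{\beta_1}\otimes\cdots\otimes A_n^{\beta_n}$. The Hamming weight $s(\beta)$ is the number of entries of $\beta$ equal to $1$. $r(\Omega)$ denotes the rank over $\mathbb{Z}_2$ of the matrix whose rows are the elements of $\Omega$. The transition matrix of a graph with adjacency matrix $A$ is $H(t)=\exp(-itA)$. A graph has pretty good state transfer (PGST) from vertex $u$ to vertex $v$ if for every $\epsilon>0$ there is $t\in\mathbb R$ with $\big||e_u^TH(t)e_v|-1\big|<\epsilon$. *)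

theory Defs
  imports Complex_Main
begin

text \<open>Elements of Z_2^n are boolean lists of length n (True = 1).\<close>

definition zvecs :: "nat \<Rightarrow> bool list set" where
  "zvecs n = {\<beta>. length \<beta> = n}"

definition hweight :: "bool list \<Rightarrow> nat" where
  "hweight \<beta> = length (filter id \<beta>)"

definition zsum :: "nat \<Rightarrow> bool list set \<Rightarrow> bool list" where
  "zsum n S = map (\<lambda>i. odd (card {\<beta>\<in>S. \<beta> ! i})) [0..<n]"

definition zzero :: "nat \<Rightarrow> bool list" where
  "zzero n = replicate n False"

definition gf2_indep :: "nat \<Rightarrow> bool list set \<Rightarrow> bool" where
  "gf2_indep n S \<longleftrightarrow> (\<forall>T\<subseteq>S. T \<noteq> {} \<longrightarrow> zsum n T \<noteq> zzero n)"

definition gf2_rank :: "nat \<Rightarrow> bool list set \<Rightarrow> nat" where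
  "gf2_rank n \<Omega> = Max {card S | S. S \<subseteq> \<Omega> \<and> gf2_indep n S}"

text \<open>The path P_3 on vertices 0,1,2.\<close>
definition p3adj :: "nat \<Rightarrow> nat \<Rightarrow> bool" where
  "p3adj a b \<longleftrightarrow> a + 1 = b \<or> b + 1 = a"

definition neps_verts :: "nat \<Rightarrow> nat list set" where
  "neps_verts n = {x. length x = n \<and> set x \<subseteq> {0,1,2}}"

text \<open>Adjacency matrix: sum over beta of A^{beta_1} (x) ... (x) A^{beta_n}.\<close>
definition neps_adj :: "nat \<Rightarrow> bool list set \<Rightarrow> nat list \<Rightarrow> nat list \<Rightarrow> complex" where
  "neps_adj n \<Omega> x y = of_nat (card {\<beta>\<in>\<Omega>. \<forall>i<n.
      (if \<beta> ! i then p3adj (x ! i) (y ! i) else x ! i = y ! i)})"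

fun neps_adj_pow :: "nat \<Rightarrow> bool list set \<Rightarrow> nat \<Rightarrow> nat list \<Rightarrow> nat list \<Rightarrow> complex" where
  "neps_adj_pow n \<Omega> 0 x y = (if x = y then 1 else 0)"
| "neps_adj_pow n \<Omega> (Suc k) x y =
     (\<Sum>w\<in>neps_verts n. neps_adj n \<Omega> x w * neps_adj_pow n \<Omega> k w y)"

definition neps_H :: "nat \<Rightarrow> bool list set \<Rightarrow> real \<Rightarrow> nat list \<Rightarrow> nat list \<Rightarrow> complex" where
  "neps_H n \<Omega> t u v = (\<Sum>k. ((- \<i> * of_real t) ^ k / of_nat (fact k)) * neps_adj_pow n \<Omega> k u v)"

definition neps_pgst :: "nat \<Rightarrow> bool list set \<Rightarrow> nat list \<Rightarrow> nat list \<Rightarrow> bool" where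
  "neps_pgst n \<Omega> u v \<longleftrightarrow> (\<forall>\<epsilon>>0. \<exists>t::real. \<bar>cmod (neps_H n \<Omega> t u v) - 1\<bar> < \<epsilon>)"

end

theory Submission
  imports Defs "HOL-Analysis.Kronecker_Approximation_Theorem"
begin


lemma cis_minus_one_le: "cmod (cis x - 1) \<le> \<bar>x\<bar>"
proof -
  have "(cmod (cis x - 1))\<^sup>2 = (cos x - 1)\<^sup>2 + (sin x)\<^sup>2"
    by (simp add: cmod_power2)
  also have "\<dots> = 2 - 2 * cos x" using sin_cos_squared_add[of x]
    by (simp add: power2_eq_square algebra_simps)
  also have "cos x = 1 - 2 * sin (x/2) ^ 2" using cos_double_sin[of "x/2"] by simp
  finally have e: "(cmod (cis x - 1))\<^sup>2 = (2 * \<bar>sin (x/2)\<bar>)\<^sup>2"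
    by (simp add: power2_eq_square)
  have "2 * \<bar>sin (x/2)\<bar> \<le> \<bar>x\<bar>" using abs_sin_x_le_abs_x[of "x/2"] by simp
  moreover have "cmod (cis x - 1) = 2 * \<bar>sin (x/2)\<bar>"
    using e by (metis abs_ge_zero norm_ge_zero power2_eq_iff_nonneg zero_le_mult_iff zero_le_numeral)
  ultimately show ?thesis by simp
qed

lemma sqrt2_irr: "sqrt 2 \<notin> \<rat>"
proof
  assume "sqrt 2 \<in> \<rat>"
  then obtain m n :: nat where n: "n \<noteq> 0" and e: "\<bar>sqrt 2\<bar> = real m / real n" and c: "coprime m n"
    by (rule Rats_abs_nat_div_natE)
  have "sqrt 2 * real n = real m" using e n by (simp add: field_simps)
  then have "(sqrt 2 * real n)^2 = (real m)^2" by simp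
  then have "2 * (real n)^2 = (real m)^2" by (simp add: power_mult_distrib)
  then have eq: "2 * n^2 = m^2" by (metis of_nat_eq_of_nat_power_cancel_iff of_nat_mult of_nat_numeral)
  then have "even (m^2)" by (metis dvd_triv_left)
  then have "even m" by simp
  then obtain k where k: "m = 2 * k" by blast
  then have "n^2 = 2 * k^2" using eq by (simp add: power_mult_distrib)
  then have "even (n^2)" by simp
  then have "even n" by simp
  with \<open>even m\<close> c have "is_unit (2::nat)" using coprime_common_divisor by blast
  then show False by simp
qed


definition evc :: "nat \<Rightarrow> real" where
  "evc c = (if c = 0 then sqrt 2 else if c = 1 then 0 else - sqrt 2)"
definition vc :: "nat \<Rightarrow> nat \<Rightarrow> real" where
  "vc c x = (if c = 1 then (if x = 0 then sqrt 2 / 2 else if x = 1 then 0 else - sqrt 2 / 2)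
             else (if x = 1 then (if c = 0 then sqrt 2 / 2 else - sqrt 2 / 2) else 1/2))"

lemma s2sq: "sqrt 2 * sqrt 2 = (2::real)" by simp

lemma vc_compl:
  assumes "x \<in> {0,1,2}" "y \<in> {0,1,2}"
  shows "(\<Sum>c\<in>{0,1,2::nat}. vc c x * vc c y) = (if x = y then 1 else 0)"
  using assms by (auto simp: vc_def s2sq)

lemma vc_eig:
  assumes "x \<in> {0,1,2}" "c \<in> {0,1,2}"
  shows "(\<Sum>y\<in>{0,1,2::nat}. (if p3adj x y then 1 else 0) * vc c y) = evc c * vc c x"
  using assms by (auto simp: vc_def evc_def p3adj_def s2sq)

lemma verts_Suc: "neps_verts (Suc n) = (\<lambda>(c,w). c#w) ` ({0,1,2} \<times> neps_verts n)"
  unfolding neps_verts_def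
  by (auto simp: length_Suc_conv image_iff)

lemma verts_0: "neps_verts 0 = {[]}" by (auto simp: neps_verts_def)

lemma finite_verts: "finite (neps_verts n)"
  by (induction n) (auto simp: verts_0 verts_Suc)

lemma sum_prod_verts:
  fixes f :: "nat \<Rightarrow> nat \<Rightarrow> 'b::comm_semiring_1"
  shows "(\<Sum>w\<in>neps_verts n. \<Prod>i<n. f i (w!i)) = (\<Prod>i<n. \<Sum>c\<in>{0,1,2::nat}. f i c)"
proof (induction n arbitrary: f)
  case 0
  then show ?case by (simp add: verts_0)
next
  case (Suc n)
  have inj: "inj_on (\<lambda>(c,w). c#w) ({0,1,2::nat} \<times> neps_verts n)"
    by (auto simp: inj_on_def)
  have "(\<Sum>w\<in>neps_verts (Suc n). \<Prod>i<Suc n. f i (w!i))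
      = (\<Sum>(c,w)\<in>{0,1,2::nat} \<times> neps_verts n. \<Prod>i<Suc n. f i ((c#w)!i))"
    unfolding verts_Suc by (subst sum.reindex[OF inj]) (simp add: case_prod_beta)
  also have "\<dots> = (\<Sum>(c,w)\<in>{0,1,2::nat} \<times> neps_verts n. f 0 c * (\<Prod>i<n. f (Suc i) (w!i)))"
    by (simp only: prod.lessThan_Suc_shift nth_Cons_0 nth_Cons_Suc)
  also have "\<dots> = (\<Sum>c\<in>{0,1,2::nat}. \<Sum>w\<in>neps_verts n. f 0 c * (\<Prod>i<n. f (Suc i) (w!i)))"
    by (subst sum.cartesian_product[symmetric]) simp
  also have "\<dots> = (\<Sum>c\<in>{0,1,2::nat}. f 0 c * (\<Prod>i<n. \<Sum>d\<in>{0,1,2::nat}. f (Suc i) d))"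
    using Suc.IH[of "\<lambda>i. f (Suc i)"] by (simp only: sum_distrib_left[symmetric])
  also have "\<dots> = (\<Prod>i<Suc n. \<Sum>c\<in>{0,1,2::nat}. f i c)"
    by (simp only: prod.lessThan_Suc_shift sum_distrib_right)
  finally show ?case .
qed


definition Vec :: "nat \<Rightarrow> nat list \<Rightarrow> nat list \<Rightarrow> real" where
  "Vec n a x = (\<Prod>i<n. vc (a!i) (x!i))"
definition Lam :: "nat \<Rightarrow> bool list set \<Rightarrow> nat list \<Rightarrow> real" where
  "Lam n \<Omega> a = (\<Sum>\<beta>\<in>\<Omega>. \<Prod>i<n. if \<beta>!i then evc (a!i) else 1)"

lemma verts_nth: "x \<in> neps_verts n \<Longrightarrow> i < n \<Longrightarrow> x!i \<in> {0,1,2}"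
  unfolding neps_verts_def using nth_mem by blast

lemma prod_indicator:
  "finite A \<Longrightarrow> (\<Prod>i\<in>A. if P i then 1 else 0 :: real) = (if \<forall>i\<in>A. P i then 1 else 0)"
  by (induction A rule: finite_induct) auto

lemma adj_real:
  assumes "finite \<Omega>"
  shows "neps_adj n \<Omega> x w = of_real (\<Sum>\<beta>\<in>\<Omega>. \<Prod>i<n.
      if (if \<beta> ! i then p3adj (x ! i) (w ! i) else x ! i = w ! i) then 1 else 0)"
proof -
  have "real (card {\<beta>\<in>\<Omega>. \<forall>i<n. (if \<beta> ! i then p3adj (x ! i) (w ! i) else x ! i = w ! i)})
     = (\<Sum>\<beta>\<in>\<Omega>. if \<forall>i<n. (if \<beta> ! i then p3adj (x ! i) (w ! i) else x ! i = w ! i) then 1 else 0)"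
    using assms by (simp add: sum.If_cases Int_def)
  also have "\<dots> = (\<Sum>\<beta>\<in>\<Omega>. \<Prod>i<n.
      if (if \<beta> ! i then p3adj (x ! i) (w ! i) else x ! i = w ! i) then 1 else 0)"
    by (intro sum.cong refl) (simp only: prod_indicator[OF finite_lessThan] Ball_def lessThan_iff)
  finally have "complex_of_real (real (card {\<beta>\<in>\<Omega>. \<forall>i<n. (if \<beta> ! i then p3adj (x ! i) (w ! i) else x ! i = w ! i)})) = complex_of_real (\<Sum>\<beta>\<in>\<Omega>. \<Prod>i<n.
      if (if \<beta> ! i then p3adj (x ! i) (w ! i) else x ! i = w ! i) then 1 else 0)" by (rule arg_cong)
  then show ?thesis unfolding neps_adj_def by simp
qed

lemma adj_eig_real:
  assumes fin: "finite \<Omega>" and x: "x \<in> neps_verts n" and a: "a \<in> neps_verts n"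
  shows "(\<Sum>w\<in>neps_verts n. (\<Sum>\<beta>\<in>\<Omega>. \<Prod>i<n.
      if (if \<beta> ! i then p3adj (x ! i) (w ! i) else x ! i = w ! i) then 1 else 0) * Vec n a w)
     = Lam n \<Omega> a * Vec n a x"
proof -
  have step: "(\<Sum>c\<in>{0,1,2::nat}. (if (if \<beta> ! i then p3adj (x ! i) c else x ! i = c) then 1 else 0) * vc (a!i) c)
      = (if \<beta>!i then evc (a!i) else 1) * vc (a!i) (x!i)" if "i < n" for \<beta> i
  proof (cases "\<beta>!i")
    case True
    then show ?thesis using vc_eig[OF verts_nth[OF x that] verts_nth[OF a that]] by simp
  next
    case False
    have "x!i \<in> {0,1,2}" using verts_nth[OF x that] .
    then show ?thesis using False by (elim insertE) auto
  qed
  have "(\<Sum>w\<in>neps_verts n. (\<Sum>\<beta>\<in>\<Omega>. \<Prod>i<n.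
      if (if \<beta> ! i then p3adj (x ! i) (w ! i) else x ! i = w ! i) then 1 else 0) * Vec n a w)
    = (\<Sum>\<beta>\<in>\<Omega>. \<Sum>w\<in>neps_verts n. \<Prod>i<n.
      (if (if \<beta> ! i then p3adj (x ! i) (w ! i) else x ! i = w ! i) then 1 else 0) * vc (a!i) (w!i))"
    unfolding Vec_def by (simp add: sum_distrib_right prod.distrib sum.swap[of _ "neps_verts n"])
  also have "\<dots> = (\<Sum>\<beta>\<in>\<Omega>. \<Prod>i<n. \<Sum>c\<in>{0,1,2::nat}.
      (if (if \<beta> ! i then p3adj (x ! i) c else x ! i = c) then 1 else 0) * vc (a!i) c)"
    by (intro sum.cong refl, subst sum_prod_verts[symmetric], rule refl)
  also have "\<dots> = (\<Sum>\<beta>\<in>\<Omega>. \<Prod>i<n. (if \<beta>!i then evc (a!i) else 1) * vc (a!i) (x!i))"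
    by (intro sum.cong prod.cong refl, rule step, simp)
  also have "\<dots> = Lam n \<Omega> a * Vec n a x"
    unfolding Lam_def Vec_def by (simp add: prod.distrib sum_distrib_right)
  finally show ?thesis .
qed

lemma prod_eq_indicator:
  "(\<Prod>i<n. if (x::nat list)!i = y!i then 1 else 0 :: real) = (if \<forall>i<n. x!i = y!i then 1 else 0)"
  using prod_indicator[of "{..<n}"] by simp

lemma completeness:
  assumes x: "x \<in> neps_verts n" and y: "y \<in> neps_verts n"
  shows "(\<Sum>a\<in>neps_verts n. Vec n a x * Vec n a y) = (if x = y then 1 else 0)"
proof -
  have "(\<Sum>a\<in>neps_verts n. Vec n a x * Vec n a y) = (\<Sum>a\<in>neps_verts n. \<Prod>i<n. vc (a!i) (x!i) * vc (a!i) (y!i))"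
    unfolding Vec_def by (simp add: prod.distrib)
  also have "\<dots> = (\<Prod>i<n. \<Sum>c\<in>{0,1,2::nat}. vc c (x!i) * vc c (y!i))"
    by (rule sum_prod_verts)
  also have "\<dots> = (\<Prod>i<n. if x!i = y!i then 1 else 0)"
  proof (intro prod.cong refl)
    fix i assume "i \<in> {..<n}"
    then show "(\<Sum>c\<in>{0,1,2::nat}. vc c (x!i) * vc c (y!i)) = (if x!i = y!i then 1 else 0)"
      using vc_compl[OF verts_nth[OF x] verts_nth[OF y]] by simp
  qed
  also have "\<dots> = (if x = y then 1 else 0)"
    using x y unfolding prod_eq_indicator neps_verts_def by (auto intro: nth_equalityI)
  finally show ?thesis .
qed


lemma pow_formula:
  assumes fin: "finite \<Omega>" and x: "x \<in> neps_verts n" and y: "y \<in> neps_verts n"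
  shows "neps_adj_pow n \<Omega> k x y = of_real (\<Sum>a\<in>neps_verts n. Lam n \<Omega> a ^ k * Vec n a x * Vec n a y)"
  using x
proof (induction k arbitrary: x)
  case 0
  then show ?case using completeness[OF 0 y] by simp
next
  case (Suc k)
  define R where "R = (\<lambda>x w. \<Sum>\<beta>\<in>\<Omega>. \<Prod>i<n.
      if (if \<beta> ! i then p3adj (x ! i) (w ! i) else x ! i = w ! i) then 1 else (0::real))"
  have "neps_adj_pow n \<Omega> (Suc k) x y
      = (\<Sum>w\<in>neps_verts n. of_real (R x w * (\<Sum>a\<in>neps_verts n. Lam n \<Omega> a ^ k * Vec n a w * Vec n a y)))"
    by (simp add: adj_real[OF fin] R_def Suc.IH cong: sum.cong)
  also have "\<dots> = of_real (\<Sum>w\<in>neps_verts n. R x w * (\<Sum>a\<in>neps_verts n. Lam n \<Omega> a ^ k * Vec n a w * Vec n a y))"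
    by (simp only: of_real_sum)
  also have "(\<Sum>w\<in>neps_verts n. R x w * (\<Sum>a\<in>neps_verts n. Lam n \<Omega> a ^ k * Vec n a w * Vec n a y))
      = (\<Sum>a\<in>neps_verts n. (Lam n \<Omega> a ^ k * Vec n a y) * (\<Sum>w\<in>neps_verts n. R x w * Vec n a w))"
  proof -
    have "(\<Sum>w\<in>neps_verts n. R x w * (\<Sum>a\<in>neps_verts n. Lam n \<Omega> a ^ k * Vec n a w * Vec n a y))
       = (\<Sum>w\<in>neps_verts n. \<Sum>a\<in>neps_verts n. (Lam n \<Omega> a ^ k * Vec n a y) * (R x w * Vec n a w))"
      by (simp add: sum_distrib_left mult_ac)
    also have "\<dots> = (\<Sum>a\<in>neps_verts n. \<Sum>w\<in>neps_verts n. (Lam n \<Omega> a ^ k * Vec n a y) * (R x w * Vec n a w))"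
      by (rule sum.swap)
    also have "\<dots> = (\<Sum>a\<in>neps_verts n. (Lam n \<Omega> a ^ k * Vec n a y) * (\<Sum>w\<in>neps_verts n. R x w * Vec n a w))"
      by (simp add: sum_distrib_left)
    finally show ?thesis .
  qed
  also have "\<dots> = (\<Sum>a\<in>neps_verts n. (Lam n \<Omega> a ^ k * Vec n a y) * (Lam n \<Omega> a * Vec n a x))"
    by (intro sum.cong refl) (simp add: R_def adj_eig_real[OF fin Suc.prems])
  also have "\<dots> = (\<Sum>a\<in>neps_verts n. Lam n \<Omega> a ^ Suc k * Vec n a x * Vec n a y)"
    by (simp add: mult_ac)
  finally show ?case .
qed

lemma H_formula:
  assumes fin: "finite \<Omega>" and u: "u \<in> neps_verts n" and v: "v \<in> neps_verts n"
  shows "neps_H n \<Omega> t u v = (\<Sum>a\<in>neps_verts n. of_real (Vec n a u * Vec n a v) * cis (- (t * Lam n \<Omega> a)))"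
proof -
  define z where "z = (\<lambda>a. - \<i> * of_real t * of_real (Lam n \<Omega> a) :: complex)"
  have trm: "((- \<i> * of_real t) ^ k / of_nat (fact k)) * neps_adj_pow n \<Omega> k u v
      = (\<Sum>a\<in>neps_verts n. of_real (Vec n a u * Vec n a v) * (z a ^ k /\<^sub>R fact k))" for k
  proof -
    have zk: "z a ^ k = (- \<i> * of_real t) ^ k * of_real (Lam n \<Omega> a ^ k)" for a
      by (simp only: z_def of_real_power power_mult_distrib)
    show ?thesis unfolding pow_formula[OF fin u v] zk
      by (simp add: of_real_sum sum_distrib_left scaleR_conv_of_real field_simps)
  qed
  have summ: "summable (\<lambda>k. of_real (Vec n a u * Vec n a v) * (z a ^ k /\<^sub>R fact k))" for a
    by (intro summable_mult summable_exp_generic)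
  have "neps_H n \<Omega> t u v = (\<Sum>k. \<Sum>a\<in>neps_verts n. of_real (Vec n a u * Vec n a v) * (z a ^ k /\<^sub>R fact k))"
    unfolding neps_H_def trm ..
  also have "\<dots> = (\<Sum>a\<in>neps_verts n. \<Sum>k. of_real (Vec n a u * Vec n a v) * (z a ^ k /\<^sub>R fact k))"
    by (rule suminf_sum) (rule summ)
  also have "\<dots> = (\<Sum>a\<in>neps_verts n. of_real (Vec n a u * Vec n a v) * exp (z a))"
    by (intro sum.cong refl) (metis sums_unique sums_mult exp_converges)
  also have "\<dots> = (\<Sum>a\<in>neps_verts n. of_real (Vec n a u * Vec n a v) * cis (- (t * Lam n \<Omega> a)))"
    by (intro sum.cong refl) (simp add: z_def cis_conv_exp mult_ac)
  finally show ?thesis .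
qed



definition sgi :: "nat \<Rightarrow> int" where
  "sgi c = (if c = 0 then 1 else if c = 1 then 0 else -1)"
definition chi :: "nat \<Rightarrow> bool list \<Rightarrow> nat list \<Rightarrow> int" where
  "chi n \<beta> a = (\<Prod>i<n. if \<beta>!i then sgi (a!i) else 1)"

lemma evc_sgi: "evc c = of_int (sgi c) * sqrt 2"
  by (simp add: evc_def sgi_def)

lemma abs_prod_int: "\<bar>prod (f :: 'a \<Rightarrow> int) A\<bar> = (\<Prod>x\<in>A. \<bar>f x\<bar>)"
  by (induction A rule: infinite_finite_induct) (auto simp: abs_mult)

lemma chi_bound: "\<bar>chi n \<beta> a\<bar> \<le> 1"
  unfolding chi_def by (simp only: abs_prod_int, rule prod_le_1, auto simp: sgi_def)

lemma sqrt2_pow: "sqrt 2 ^ s = (if even s then 2 ^ (s div 2) else sqrt 2 * 2 ^ (s div 2))"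
proof (cases "even s")
  case True
  then obtain q where "s = 2 * q" by blast
  then show ?thesis by (simp add: power_mult)
next
  case False
  then obtain q where "s = 2 * q + 1" using oddE by blast
  then show ?thesis by (simp add: power_mult)
qed

lemma hweight_card: "length \<beta> = n \<Longrightarrow> hweight \<beta> = card {i\<in>{..<n}. \<beta>!i}"
  unfolding hweight_def length_filter_conv_card by (auto intro!: arg_cong[where f=card])

lemma T_eq:
  assumes "length \<beta> = n"
  shows "(\<Prod>i<n. if \<beta>!i then evc (a!i) else 1) = of_int (chi n \<beta> a) * sqrt 2 ^ hweight \<beta>"
proof -
  have "(\<Prod>i<n. if \<beta>!i then evc (a!i) else 1)
      = (\<Prod>i<n. of_int (if \<beta>!i then sgi (a!i) else 1) * (if \<beta>!i then sqrt 2 else 1))"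
    by (intro prod.cong refl) (simp add: evc_sgi)
  also have "\<dots> = of_int (chi n \<beta> a) * (\<Prod>i<n. if \<beta>!i then sqrt 2 else 1)"
    by (simp add: prod.distrib chi_def)
  also have "(\<Prod>i<n. if \<beta>!i then sqrt 2 else 1) = sqrt 2 ^ card {i\<in>{..<n}. \<beta>!i}"
    by (simp add: prod.If_cases Int_def)
  finally show ?thesis using hweight_card[OF assms] by simp
qed

lemma beta_decomp:
  fixes ch m p :: int
  assumes hyp: "\<exists>M::int. (if even s then \<theta>1 * 2^(s div 2) else \<theta>2 * 2^(s div 2)) = pi * M \<and> (odd M \<longleftrightarrow> P)"
    and t1: "t = \<theta>1 + 2*pi*m" and t2: "sqrt 2 * t = \<theta>2 + 2*pi*p + \<eta>"
  shows "\<exists>x::int\<times>int\<times>real. t * (of_int ch * sqrt 2 ^ s) = pi * fst x * ch + 2 * pi * fst (snd x) + \<eta> * snd (snd x)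
      \<and> \<bar>snd (snd x)\<bar> \<le> 2^(s div 2) * \<bar>ch\<bar> \<and> (odd (fst x) \<longleftrightarrow> P)"
proof -
  obtain M :: int where M: "(if even s then \<theta>1 * 2^(s div 2) else \<theta>2 * 2^(s div 2)) = pi * M" "odd M \<longleftrightarrow> P"
    using hyp by blast
  show ?thesis
  proof (cases "even s")
    case True
    have e: "\<theta>1 * 2^(s div 2) = pi * M" using M True by simp
    have "t * (of_int ch * sqrt 2 ^ s) = (\<theta>1 * 2^(s div 2)) * ch + 2 * pi * (m * 2^(s div 2) * ch)"
      using True by (simp add: sqrt2_pow t1 algebra_simps)
    also have "\<dots> = pi * M * ch + 2 * pi * of_int (m * 2^(s div 2) * ch) + \<eta> * 0"
      by (simp add: e)
    finally show ?thesis using M(2) by (intro exI[of _ "(M, m * 2^(s div 2) * ch, 0)"]) simp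
  next
    case False
    have e: "\<theta>2 * 2^(s div 2) = pi * M" using M False by simp
    have "t * (of_int ch * sqrt 2 ^ s) = (sqrt 2 * t) * 2^(s div 2) * ch"
      using False by (simp add: sqrt2_pow algebra_simps)
    also have "\<dots> = (\<theta>2 * 2^(s div 2)) * ch + 2 * pi * (p * 2^(s div 2) * ch) + \<eta> * (2^(s div 2) * ch)"
      unfolding t2 by (simp add: algebra_simps)
    also have "\<dots> = pi * M * ch + 2 * pi * of_int (p * 2^(s div 2) * ch) + \<eta> * (2^(s div 2) * ch)"
      by (simp add: e)
    finally show ?thesis using M(2)
      by (intro exI[of _ "(M, p * 2^(s div 2) * ch, real_of_int (2^(s div 2) * ch))"]) (simp add: abs_mult)
  qed
qed

lemma cis_int_pi: "cis (-(pi * of_int K)) = (if even K then 1 else -1)"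
proof (cases "even K")
  case True
  then obtain q where q: "K = 2 * q" by blast
  have "-(pi * of_int K) = 2 * pi * of_int (-q)" by (simp add: q)
  then have "cis (-(pi * of_int K)) = cis (2 * pi * of_int (-q))" by (rule arg_cong)
  also have "\<dots> = 1" by (rule cis_multiple_2pi) simp
  finally show ?thesis using True by simp
next
  case False
  then obtain q where q: "K = 2 * q + 1" using oddE by blast
  have "-(pi * of_int K) = 2 * pi * of_int (-q) + (- pi)" by (simp add: q algebra_simps)
  then have "cis (-(pi * of_int K)) = cis (2 * pi * of_int (-q)) * cis (- pi)" by (simp add: cis_mult)
  also have "\<dots> = -1" by (simp add: cis_cnj[symmetric])
  finally show ?thesis using False by simp
qed



lemma card_split: "finite S \<Longrightarrow> card S = card {x\<in>S. P x} + card {x\<in>S. \<not> P x}"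
proof -
  assume fs: "finite S"
  have "S = {x\<in>S. P x} \<union> {x\<in>S. \<not> P x}" by auto
  then have "card S = card ({x\<in>S. P x} \<union> {x\<in>S. \<not> P x})" by simp
  also have "\<dots> = card {x\<in>S. P x} + card {x\<in>S. \<not> P x}"
    using fs by (intro card_Un_disjoint) auto
  finally show ?thesis .
qed

lemma chi_zero_iff:
  assumes j: "j < n" and supp: "\<forall>i<n. i \<noteq> j \<longrightarrow> a!i \<noteq> 1"
  shows "chi n \<beta> a = 0 \<longleftrightarrow> \<beta>!j \<and> a!j = 1"
proof -
  have "chi n \<beta> a = 0 \<longleftrightarrow> (\<exists>i\<in>{..<n}. (if \<beta>!i then sgi (a!i) else 1) = 0)"
    unfolding chi_def by (rule prod_zero_iff) simp
  also have "\<dots> \<longleftrightarrow> (\<exists>i<n. \<beta>!i \<and> a!i = 1)" by (auto simp: sgi_def)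
  also have "\<dots> \<longleftrightarrow> \<beta>!j \<and> a!j = 1" using j supp by auto
  finally show ?thesis .
qed

lemma odd_chi: "odd (chi n \<beta> a) \<longleftrightarrow> chi n \<beta> a \<noteq> 0"
proof -
  have "chi n \<beta> a \<in> {-1,0,1}" using chi_bound[of n \<beta> a] by auto
  then show ?thesis by auto
qed

lemma phase:
  fixes m p :: int
  assumes fin: "finite \<Omega>" and len: "\<forall>\<beta>\<in>\<Omega>. length \<beta> = n" and j: "j < n"
    and supp: "\<forall>i<n. i \<noteq> j \<longrightarrow> a!i \<noteq> 1" and S\<Omega>: "S \<subseteq> \<Omega>" and oddj: "odd (card {\<beta>\<in>S. \<beta>!j})"
    and hyp: "\<forall>\<beta>\<in>\<Omega>. \<exists>M::int. (if even (hweight \<beta>) then \<theta>1 * 2^(hweight \<beta> div 2) else \<theta>2 * 2^(hweight \<beta> div 2)) = pi*M \<and> (odd M \<longleftrightarrow> \<beta>\<in>S)"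
    and t1: "t = \<theta>1 + 2*pi*m" and t2: "sqrt 2 * t = \<theta>2 + 2*pi*p + \<eta>"
  shows "cmod (cis (-(t * Lam n \<Omega> a)) - of_real ((if even (card S) then 1 else -1) * (if a!j = 1 then -1 else 1)))
         \<le> \<bar>\<eta>\<bar> * (\<Sum>\<beta>\<in>\<Omega>. 2^(hweight \<beta> div 2))"
proof -
  have "\<forall>\<beta>\<in>\<Omega>. \<exists>x::int\<times>int\<times>real. t * (of_int (chi n \<beta> a) * sqrt 2 ^ hweight \<beta>) = pi * fst x * chi n \<beta> a + 2*pi*fst (snd x) + \<eta> * snd (snd x)
      \<and> \<bar>snd (snd x)\<bar> \<le> 2^(hweight \<beta> div 2) * \<bar>chi n \<beta> a\<bar> \<and> (odd (fst x) \<longleftrightarrow> \<beta>\<in>S)"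
  proof
    fix \<beta> assume "\<beta> \<in> \<Omega>"
    then show "\<exists>x::int\<times>int\<times>real. t * (of_int (chi n \<beta> a) * sqrt 2 ^ hweight \<beta>) = pi * fst x * chi n \<beta> a + 2*pi*fst (snd x) + \<eta> * snd (snd x)
      \<and> \<bar>snd (snd x)\<bar> \<le> 2^(hweight \<beta> div 2) * \<bar>chi n \<beta> a\<bar> \<and> (odd (fst x) \<longleftrightarrow> \<beta>\<in>S)"
      using beta_decomp[OF hyp[rule_format, OF \<open>\<beta>\<in>\<Omega>\<close>] t1 t2, of "chi n \<beta> a"] by simp
  qed
  from bchoice[OF this] obtain f :: "bool list \<Rightarrow> int \<times> int \<times> real" where f: "\<forall>\<beta>\<in>\<Omega>. t * (of_int (chi n \<beta> a) * sqrt 2 ^ hweight \<beta>) = pi * fst (f \<beta>) * chi n \<beta> a + 2*pi*fst (snd (f \<beta>)) + \<eta> * snd (snd (f \<beta>))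
      \<and> \<bar>snd (snd (f \<beta>))\<bar> \<le> 2^(hweight \<beta> div 2) * \<bar>chi n \<beta> a\<bar> \<and> (odd (fst (f \<beta>)) \<longleftrightarrow> \<beta>\<in>S)"
    ..
  define M where "M = (\<lambda>\<beta>. fst (f \<beta>))"
  define N where "N = (\<lambda>\<beta>. fst (snd (f \<beta>)))"
  define c where "c = (\<lambda>\<beta>. snd (snd (f \<beta>)))"
  define Kp where "Kp = (\<Sum>\<beta>\<in>\<Omega>. M \<beta> * chi n \<beta> a)"
  define Ns where "Ns = (\<Sum>\<beta>\<in>\<Omega>. N \<beta>)"
  define Cs where "Cs = (\<Sum>\<beta>\<in>\<Omega>. c \<beta>)"
  have fb: "t * (of_int (chi n \<beta> a) * sqrt 2 ^ hweight \<beta>) = pi * M \<beta> * chi n \<beta> a + 2*pi*N \<beta> + \<eta> * c \<beta>"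
    "\<bar>c \<beta>\<bar> \<le> 2^(hweight \<beta> div 2) * \<bar>chi n \<beta> a\<bar>" "odd (M \<beta>) \<longleftrightarrow> \<beta>\<in>S" if "\<beta> \<in> \<Omega>" for \<beta>
    using f that unfolding M_def N_def c_def by auto
  have "t * Lam n \<Omega> a = (\<Sum>\<beta>\<in>\<Omega>. t * (of_int (chi n \<beta> a) * sqrt 2 ^ hweight \<beta>))"
    unfolding Lam_def sum_distrib_left using len by (intro sum.cong refl) (simp add: T_eq)
  also have "\<dots> = (\<Sum>\<beta>\<in>\<Omega>. pi * M \<beta> * chi n \<beta> a + 2*pi*N \<beta> + \<eta> * c \<beta>)"
    by (intro sum.cong refl) (simp add: fb)
  also have "\<dots> = pi * of_int Kp + 2*pi * of_int Ns + \<eta> * Cs"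
    unfolding Kp_def Ns_def Cs_def by (simp add: sum.distrib sum_distrib_left mult.assoc)
  finally have tL: "t * Lam n \<Omega> a = pi * of_int Kp + 2*pi * of_int Ns + \<eta> * Cs" .
  have "cis (-(t * Lam n \<Omega> a)) = cis (-(pi * of_int Kp)) * cis (2*pi * of_int (-Ns)) * cis (-(\<eta> * Cs))"
    unfolding tL cis_mult by (simp add: algebra_simps)
  also have "cis (2*pi * of_int (-Ns)) = 1" by (rule cis_multiple_2pi) simp
  finally have cisL: "cis (-(t * Lam n \<Omega> a)) = (if even Kp then 1 else -1) * cis (-(\<eta> * Cs))"
    by (simp add: cis_int_pi)
  have "even Kp \<longleftrightarrow> even (card {\<beta>\<in>\<Omega>. odd (M \<beta> * chi n \<beta> a)})"
    unfolding Kp_def using fin by (rule even_sum_iff)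
  also have "{\<beta>\<in>\<Omega>. odd (M \<beta> * chi n \<beta> a)} = {\<beta>\<in>S. \<not> (\<beta>!j \<and> a!j = 1)}"
    using fb(3) S\<Omega> chi_zero_iff[OF j supp] odd_chi by auto
  finally have evK: "even Kp \<longleftrightarrow> even (card {\<beta>\<in>S. \<not> (\<beta>!j \<and> a!j = 1)})" .
  have finS: "finite S" using S\<Omega> fin finite_subset by auto
  have sgn: "(if even Kp then 1 else -1) = complex_of_real ((if even (card S) then 1 else -1) * (if a!j = 1 then -1 else 1))"
  proof (cases "a!j = 1")
    case True
    have "card S = card {\<beta>\<in>S. \<beta>!j} + card {\<beta>\<in>S. \<not> \<beta>!j}" using card_split[OF finS] .
    then have "even Kp \<longleftrightarrow> odd (card S)" using evK True oddj by auto
    then show ?thesis using True by auto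
  next
    case False
    then show ?thesis using evK by auto
  qed
  have Cb: "\<bar>Cs\<bar> \<le> (\<Sum>\<beta>\<in>\<Omega>. 2^(hweight \<beta> div 2))"
  proof -
    have "\<bar>Cs\<bar> \<le> (\<Sum>\<beta>\<in>\<Omega>. \<bar>c \<beta>\<bar>)" unfolding Cs_def by (rule sum_abs)
    also have "\<dots> \<le> (\<Sum>\<beta>\<in>\<Omega>. 2^(hweight \<beta> div 2))"
    proof (rule sum_mono)
      fix \<beta> assume "\<beta> \<in> \<Omega>"
      then have "\<bar>c \<beta>\<bar> \<le> 2^(hweight \<beta> div 2) * \<bar>chi n \<beta> a\<bar>" by (rule fb(2))
      also have "\<dots> \<le> 2^(hweight \<beta> div 2)"
      proof -
        have "real_of_int \<bar>chi n \<beta> a\<bar> \<le> 1" using chi_bound[of n \<beta> a] by linarith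
        then show ?thesis by (simp add: mult_left_le)
      qed
      finally show "\<bar>c \<beta>\<bar> \<le> 2^(hweight \<beta> div 2)" .
    qed
    finally show ?thesis .
  qed
  define s0 where "s0 = complex_of_real ((if even (card S) then 1 else -1) * (if a!j = 1 then -1 else 1))"
  have "cmod s0 = 1" unfolding s0_def by auto
  have "cmod (cis (-(t * Lam n \<Omega> a)) - s0) = cmod (s0 * (cis (-(\<eta> * Cs)) - 1))"
    unfolding cisL sgn s0_def by (simp add: algebra_simps)
  also have "\<dots> = cmod (cis (-(\<eta> * Cs)) - 1)" using \<open>cmod s0 = 1\<close> by (simp add: norm_mult)
  also have "\<dots> \<le> \<bar>\<eta> * Cs\<bar>" using cis_minus_one_le[of "-(\<eta> * Cs)"] by simp
  also have "\<dots> \<le> \<bar>\<eta>\<bar> * (\<Sum>\<beta>\<in>\<Omega>. 2^(hweight \<beta> div 2))"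
    unfolding abs_mult using Cb by (intro mult_left_mono) auto
  finally show ?thesis unfolding s0_def .
qed



lemma pow_ratio:
  assumes "l \<le> s" "even s = even l"
  shows "\<exists>M::int. pi / 2^(l div 2) * 2^(s div 2) = pi * M \<and> (odd M \<longleftrightarrow> s = l)"
proof -
  have le: "l div 2 \<le> s div 2" using assms(1) by (simp add: div_le_mono)
  define d where "d = s div 2 - l div 2"
  have "(2::real)^(s div 2) = 2^(l div 2) * 2^d" unfolding d_def using le
    by (simp add: power_add[symmetric])
  then have e: "pi / 2^(l div 2) * 2^(s div 2) = pi * of_int ((2::int)^d)" by simp
  have "odd ((2::int)^d) \<longleftrightarrow> d = 0" by simp
  also have "\<dots> \<longleftrightarrow> s = l" unfolding d_def using le assms
    by (metis diff_is_0_eq dvd_mult_div_cancel le_antisym odd_two_times_div_two_succ)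
  finally show ?thesis using e by blast
qed

lemma zsum_nz:
  assumes "zsum n S \<noteq> zzero n"
  shows "\<exists>j<n. odd (card {\<beta>\<in>S. \<beta>!j})"
proof (rule ccontr)
  assume "\<not> ?thesis"
  then have "zsum n S = zzero n" unfolding zsum_def zzero_def
    by (intro nth_equalityI) auto
  then show False using assms by simp
qed

lemma kron:
  assumes "\<delta> > 0"
  shows "\<exists>m p :: int. \<bar>sqrt 2 * (\<theta>1 + 2*pi*real_of_int m) - \<theta>2 - 2*pi*real_of_int p\<bar> < \<delta>"
proof -
  obtain h k :: int where hk: "\<bar>of_int k * sqrt 2 - of_int h - (\<theta>2 - sqrt 2 * \<theta>1) / (2*pi)\<bar> < \<delta> / (2*pi)"
    using sequence_of_fractional_parts_is_dense[OF sqrt2_irr, of "\<delta>/(2*pi)"] assms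
    by (metis divide_pos_pos pi_gt_zero zero_less_numeral mult_pos_pos)
  have "sqrt 2 * (\<theta>1 + 2*pi*k) - \<theta>2 - 2*pi*h = 2*pi * (of_int k * sqrt 2 - of_int h - (\<theta>2 - sqrt 2 * \<theta>1) / (2*pi))"
    by (simp add: field_simps)
  then have "\<bar>sqrt 2 * (\<theta>1 + 2*pi*k) - \<theta>2 - 2*pi*h\<bar> = 2*pi * \<bar>of_int k * sqrt 2 - of_int h - (\<theta>2 - sqrt 2 * \<theta>1) / (2*pi)\<bar>"
    by (simp add: abs_mult)
  also have "\<dots> < 2*pi * (\<delta> / (2*pi))" using hk by (intro mult_strict_left_mono) auto
  also have "\<dots> = \<delta>" by simp
  finally show ?thesis by blast
qed



lemma core:
  assumes fin: "finite \<Omega>" and len: "\<forall>\<beta>\<in>\<Omega>. length \<beta> = n" and j: "j < n"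
    and S\<Omega>: "S \<subseteq> \<Omega>" and oddj: "odd (card {\<beta>\<in>S. \<beta>!j})"
    and hyp: "\<forall>\<beta>\<in>\<Omega>. \<exists>M::int. (if even (hweight \<beta>) then \<theta>1 * 2^(hweight \<beta> div 2) else \<theta>2 * 2^(hweight \<beta> div 2)) = pi*M \<and> (odd M \<longleftrightarrow> \<beta>\<in>S)"
  shows "\<exists>u\<in>neps_verts n. \<exists>v\<in>neps_verts n. u \<noteq> v \<and> neps_pgst n \<Omega> u v"
proof -
  define u where "u = (replicate n (1::nat))[j := 0]"
  define v where "v = (replicate n (1::nat))[j := 2]"
  have uj: "u!j = 0" and vj: "v!j = 2" using j by (simp_all add: u_def v_def)
  have ui: "u!i = 1" "v!i = 1" if "i \<noteq> j" "i < n" for i using that by (simp_all add: u_def v_def)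
  have uv: "u \<in> neps_verts n" "v \<in> neps_verts n"
    unfolding neps_verts_def u_def v_def using set_update_subset_insert by fastforce+
  have "u \<noteq> v" using uj vj by auto
  define W where "W = (\<lambda>a. Vec n a u * Vec n a v)"
  define g where "g = (\<lambda>a::nat list. if a!j = 1 then -1 else (1::real))"
  define F where "F = (\<lambda>i c. vc c (u!i) * vc c (v!i) * (if i = j \<and> c = 1 then -1 else (1::real)))"
  have WgF: "W a * g a = (\<Prod>i<n. F i (a!i))" for a
  proof -
    have "g a = (\<Prod>i<n. if i = j then (if a!i = 1 then -1 else 1) else (1::real))"
      unfolding g_def using j by (subst prod.delta) auto
    also have "\<dots> = (\<Prod>i<n. if i = j \<and> a!i = 1 then -1 else (1::real))"
      by (intro prod.cong refl) auto
    finally show ?thesis unfolding W_def Vec_def F_def by (simp add: prod.distrib)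
  qed
  have Fsum: "(\<Sum>c\<in>{0,1,2::nat}. F i c) = 1" if "i < n" for i
  proof (cases "i = j")
    case True
    then show ?thesis unfolding F_def using uj vj by (simp add: vc_def s2sq field_simps)
  next
    case False
    then show ?thesis unfolding F_def using ui[OF False that] by (simp add: vc_def s2sq field_simps)
  qed
  have Fnn: "F i c \<ge> 0" if "i < n" "c \<in> {0,1,2}" for i c
  proof (cases "i = j")
    case True
    then show ?thesis unfolding F_def using uj vj that by (auto simp: vc_def s2sq)
  next
    case False
    then show ?thesis unfolding F_def using ui[OF False \<open>i<n\<close>] that by (auto simp: vc_def s2sq)
  qed
  have sumWg: "(\<Sum>a\<in>neps_verts n. W a * g a) = 1"
    unfolding WgF sum_prod_verts using Fsum by simp
  have absW: "\<bar>W a\<bar> = W a * g a" if "a \<in> neps_verts n" for a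
  proof -
    have "W a * g a \<ge> 0" unfolding WgF using Fnn verts_nth[OF that] by (intro prod_nonneg) auto
    moreover have "\<bar>W a\<bar> = \<bar>W a * g a\<bar>" by (simp add: g_def abs_mult)
    ultimately show ?thesis by simp
  qed
  have sumabsW: "(\<Sum>a\<in>neps_verts n. \<bar>W a\<bar>) = 1" using absW sumWg by simp
  have supp: "\<forall>i<n. i \<noteq> j \<longrightarrow> a!i \<noteq> 1" if "W a \<noteq> 0" for a
  proof (intro allI impI)
    fix i assume i: "i < n" "i \<noteq> j"
    show "a!i \<noteq> 1"
    proof
      assume "a!i = 1"
      then have "Vec n a u = 0" unfolding Vec_def using i ui[OF i(2) i(1)]
        by (intro prod_zero) (auto simp: vc_def intro!: bexI[of _ i])
      then show False using that by (simp add: W_def)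
    qed
  qed
  define B where "B = (\<Sum>\<beta>\<in>\<Omega>. (2::real)^(hweight \<beta> div 2))"
  have B0: "B \<ge> 0" unfolding B_def by (intro sum_nonneg) auto
  define \<sigma> where "\<sigma> = (if even (card S) then 1 else (-1::real))"
  have "neps_pgst n \<Omega> u v"
    unfolding neps_pgst_def
  proof (intro allI impI)
    fix \<epsilon> :: real assume \<epsilon>: "\<epsilon> > 0"
    define \<delta> where "\<delta> = \<epsilon> / (B + 1)"
    have \<delta>: "\<delta> > 0" unfolding \<delta>_def using \<epsilon> B0 by simp
    obtain m p :: int where mp: "\<bar>sqrt 2 * (\<theta>1 + 2*pi*m) - \<theta>2 - 2*pi*p\<bar> < \<delta>"
      using kron[OF \<delta>] by blast
    define t where "t = \<theta>1 + 2*pi*m"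
    define \<eta> where "\<eta> = sqrt 2 * t - \<theta>2 - 2*pi*p"
    have t2: "sqrt 2 * t = \<theta>2 + 2*pi*p + \<eta>" unfolding \<eta>_def by simp
    have \<eta>: "\<bar>\<eta>\<bar> < \<delta>" using mp unfolding \<eta>_def t_def .
    have \<eta>B: "\<bar>\<eta>\<bar> * B < \<epsilon>"
    proof -
      have "\<bar>\<eta>\<bar> * B \<le> \<delta> * B" using \<eta> B0 by (intro mult_right_mono) auto
      also have "\<dots> < \<epsilon>" unfolding \<delta>_def using \<epsilon> B0 by (simp add: field_simps)
      finally show ?thesis .
    qed
    have H: "neps_H n \<Omega> t u v = (\<Sum>a\<in>neps_verts n. of_real (W a) * cis (- (t * Lam n \<Omega> a)))"
      unfolding W_def by (rule H_formula[OF fin uv])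
    have sig: "of_real \<sigma> = (\<Sum>a\<in>neps_verts n. of_real (W a) * of_real (\<sigma> * g a) :: complex)"
    proof -
      have "(\<Sum>a\<in>neps_verts n. of_real (W a) * of_real (\<sigma> * g a) :: complex)
          = of_real (\<sigma> * (\<Sum>a\<in>neps_verts n. W a * g a))"
        by (simp add: sum_distrib_left mult_ac)
      then show ?thesis using sumWg by simp
    qed
    have "cmod (neps_H n \<Omega> t u v - of_real \<sigma>)
        = cmod (\<Sum>a\<in>neps_verts n. of_real (W a) * (cis (- (t * Lam n \<Omega> a)) - of_real (\<sigma> * g a)))"
      unfolding H sig by (simp add: sum_subtractf algebra_simps)
    also have "\<dots> \<le> (\<Sum>a\<in>neps_verts n. \<bar>W a\<bar> * cmod (cis (- (t * Lam n \<Omega> a)) - of_real (\<sigma> * g a)))"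
      by (rule order_trans[OF norm_sum]) (simp add: norm_mult)
    also have "\<dots> \<le> (\<Sum>a\<in>neps_verts n. \<bar>W a\<bar> * (\<bar>\<eta>\<bar> * B))"
    proof (rule sum_mono)
      fix a assume a: "a \<in> neps_verts n"
      show "\<bar>W a\<bar> * cmod (cis (- (t * Lam n \<Omega> a)) - of_real (\<sigma> * g a)) \<le> \<bar>W a\<bar> * (\<bar>\<eta>\<bar> * B)"
      proof (cases "W a = 0")
        case True then show ?thesis by simp
      next
        case False
        have "cmod (cis (- (t * Lam n \<Omega> a)) - of_real (\<sigma> * g a)) \<le> \<bar>\<eta>\<bar> * B"
          using phase[OF fin len j supp[OF False] S\<Omega> oddj hyp t_def t2]
          unfolding \<sigma>_def g_def B_def by simp
        then show ?thesis by (intro mult_left_mono) auto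
      qed
    qed
    also have "\<dots> = \<bar>\<eta>\<bar> * B" using sumabsW by (simp add: sum_distrib_right[symmetric])
    finally have "cmod (neps_H n \<Omega> t u v - of_real \<sigma>) < \<epsilon>" using \<eta>B by simp
    moreover have "\<bar>cmod (neps_H n \<Omega> t u v) - 1\<bar> \<le> cmod (neps_H n \<Omega> t u v - of_real \<sigma>)"
    proof -
      have n1: "cmod (complex_of_real \<sigma>) = 1" unfolding \<sigma>_def by simp
      show ?thesis using norm_triangle_ineq3[of "neps_H n \<Omega> t u v" "of_real \<sigma>"] unfolding n1 .
    qed
    ultimately show "\<exists>t. \<bar>cmod (neps_H n \<Omega> t u v) - 1\<bar> < \<epsilon>" by (intro exI[of _ t]) simp
  qed
  then show ?thesis using uv \<open>u \<noteq> v\<close> by blast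
qed



theorem theorem3p9:
  fixes n :: nat and \<Omega> \<Omega>e \<Omega>o :: "bool list set"
  assumes "\<Omega> \<subseteq> zvecs n - {zzero n}"
    and "\<Omega> = \<Omega>e \<union> \<Omega>o"
    and "\<Omega>e \<noteq> {}" and "\<Omega>o \<noteq> {}"
    and "\<forall>\<beta>\<in>\<Omega>e. even (hweight \<beta>)"
    and "\<forall>\<beta>\<in>\<Omega>o. odd (hweight \<beta>)"
    and "gf2_rank n \<Omega> = n"
    and "zsum n {\<beta>\<in>\<Omega>o. hweight \<beta> = Min (hweight ` \<Omega>o)} \<noteq> zzero n
         \<or> zsum n {\<beta>\<in>\<Omega>e. hweight \<beta> = Min (hweight ` \<Omega>e)} \<noteq> zzero n"
  shows "\<exists>u\<in>neps_verts n. \<exists>v\<in>neps_verts n. u \<noteq> v \<and> neps_pgst n \<Omega> u v"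
proof -
  note sub = assms(1) and un = assms(2) and ev = assms(5) and od = assms(6)
  have "finite (zvecs n)" unfolding zvecs_def
    using finite_lists_length_eq[of "UNIV :: bool set" n] by simp
  then have fin: "finite \<Omega>" using sub finite_subset by blast
  have len: "\<forall>\<beta>\<in>\<Omega>. length \<beta> = n" using sub by (auto simp: zvecs_def)
  have fe: "finite \<Omega>e" and fo: "finite \<Omega>o" using fin un by auto
  show ?thesis
  proof (cases "zsum n {\<beta>\<in>\<Omega>o. hweight \<beta> = Min (hweight ` \<Omega>o)} \<noteq> zzero n")
    case True
    define l where "l = Min (hweight ` \<Omega>o)"
    define S where "S = {\<beta>\<in>\<Omega>o. hweight \<beta> = l}"
    obtain j where j: "j < n" "odd (card {\<beta>\<in>S. \<beta>!j})"
      using zsum_nz[OF True] unfolding S_def l_def by blast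
    have "l \<in> hweight ` \<Omega>o" unfolding l_def using fo assms(4) by (intro Min_in) auto
    then have oddl: "odd l" using od by auto
    have hyp: "\<forall>\<beta>\<in>\<Omega>. \<exists>M::int. (if even (hweight \<beta>) then 0 * 2^(hweight \<beta> div 2) else pi / 2^(l div 2) * 2^(hweight \<beta> div 2)) = pi*M \<and> (odd M \<longleftrightarrow> \<beta>\<in>S)"
    proof
      fix \<beta> assume b: "\<beta> \<in> \<Omega>"
      show "\<exists>M::int. (if even (hweight \<beta>) then 0 * 2^(hweight \<beta> div 2) else pi / 2^(l div 2) * 2^(hweight \<beta> div 2)) = pi*M \<and> (odd M \<longleftrightarrow> \<beta>\<in>S)"
      proof (cases "even (hweight \<beta>)")
        case True
        then have "\<beta> \<notin> S" using od unfolding S_def by auto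
        then show ?thesis using True by (intro exI[of _ 0]) simp
      next
        case False
        then have bo: "\<beta> \<in> \<Omega>o" using b un ev by auto
        have "l \<le> hweight \<beta>" unfolding l_def using fo bo by (intro Min_le) auto
        then obtain M :: int where "pi / 2^(l div 2) * 2^(hweight \<beta> div 2) = pi * M" "odd M \<longleftrightarrow> hweight \<beta> = l"
          using pow_ratio[of l "hweight \<beta>"] False oddl by auto
        then show ?thesis using False bo unfolding S_def by (intro exI[of _ M]) auto
      qed
    qed
    show ?thesis
      by (rule core[OF fin len j(1) _ j(2) hyp]) (auto simp: S_def un)
  next
    case False
    then have True': "zsum n {\<beta>\<in>\<Omega>e. hweight \<beta> = Min (hweight ` \<Omega>e)} \<noteq> zzero n" using assms(8) by blast
    define k where "k = Min (hweight ` \<Omega>e)"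
    define S where "S = {\<beta>\<in>\<Omega>e. hweight \<beta> = k}"
    obtain j where j: "j < n" "odd (card {\<beta>\<in>S. \<beta>!j})"
      using zsum_nz[OF True'] unfolding S_def k_def by blast
    have "k \<in> hweight ` \<Omega>e" unfolding k_def using fe assms(3) by (intro Min_in) auto
    then have evk: "even k" using ev by auto
    have hyp: "\<forall>\<beta>\<in>\<Omega>. \<exists>M::int. (if even (hweight \<beta>) then pi / 2^(k div 2) * 2^(hweight \<beta> div 2) else 0 * 2^(hweight \<beta> div 2)) = pi*M \<and> (odd M \<longleftrightarrow> \<beta>\<in>S)"
    proof
      fix \<beta> assume b: "\<beta> \<in> \<Omega>"
      show "\<exists>M::int. (if even (hweight \<beta>) then pi / 2^(k div 2) * 2^(hweight \<beta> div 2) else 0 * 2^(hweight \<beta> div 2)) = pi*M \<and> (odd M \<longleftrightarrow> \<beta>\<in>S)"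
      proof (cases "even (hweight \<beta>)")
        case False
        then have "\<beta> \<notin> S" using ev unfolding S_def by auto
        then show ?thesis using False by (intro exI[of _ 0]) simp
      next
        case True
        then have be: "\<beta> \<in> \<Omega>e" using b un od by auto
        have "k \<le> hweight \<beta>" unfolding k_def using fe be by (intro Min_le) auto
        then obtain M :: int where "pi / 2^(k div 2) * 2^(hweight \<beta> div 2) = pi * M" "odd M \<longleftrightarrow> hweight \<beta> = k"
          using pow_ratio[of k "hweight \<beta>"] True evk by auto
        then show ?thesis using True be unfolding S_def by (intro exI[of _ M]) auto
      qed
    qed
    show ?thesis
      by (rule core[OF fin len j(1) _ j(2) hyp]) (auto simp: S_def un)
  qed
qed


end
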